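(* If $\Gamma\vdash^A M:\tau$ and $M\xrightarrow{T}N$, then $\varepsilon\le AT$, i.e. the path $AT$ is positive.
   Context: Calculus $\lambda^{\triangleright}$. Transition variables $\alpha,\beta,\dots$; a transition (stage) $A,B$ is a finite sequence of transition variables ($\varepsilon$ empty, $AB$ concatenation). Types $\tau ::= b \mid \tau\to\tau \mid \triangleright_\alpha\tau \mid \forall\alpha.\tau$; terms $M ::= x \mid M\,M \mid \lambda x{:}\tau.M \mid \blacktriangleright_\alpha M \mid \blacktriangleleft_\alpha M \mid \Lambda\alpha.M \mid M\,A$ (quotation, unquotation, transition abstraction, instantiation). For $A=\alpha_1\cdots\alpha_n$: $\triangleright_A\tau=\triangleright_{\alpha_1}\cdots\triangleright_{\alpha_n}\tau$, $\blacktriangleright_A M=\blacktriangleright_{\alpha_1}\cdots\blacktriangleright_{\alpha_n}M$, $\blacktriangleleft_A M=\blacktriangleleft_{\alpha_n}\cdots\blacktriangleleft_{\alpha_1}M$ (identity for $A=\varepsilon$). Substitutions $M[x:=N]$, and $\tau[\alpha:=B]$, $M[\alpha:=B]$ (replacing $\alpha$ by $B$ in transitions and $\triangleright_\alpha,\blacktriangleright_\alpha,\blacktriangleleft_\alpha$ by $\triangleright_B,\blacktriangleright_B,\blacktriangleleft_B$) are capture-avoiding. A context $\Gamma$ is a finite set $\{x_i:\tau_i@A_i\}$ with distinct $x_i$; FTV denotes free transition variables. Typing $\Gamma\vdash^A M:\tau$: (Var) $x:\tau@A\in\Gamma\Rightarrow\Gamma\vdash^Ax:\tau$; (Abs) $\Gamma,x:\tau@A\vdash^AM:\sigma\Rightarrow\Gamma\vdash^A\lambda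 x{:}\tau.M:\tau\to\sigma$; (App) from $\Gamma\vdash^AM:\tau\to\sigma$, $\Gamma\vdash^AN:\tau$ infer $\Gamma\vdash^AMN:\sigma$; (Quote) $\Gamma\vdash^{A\alpha}M:\tau\Rightarrow\Gamma\vdash^A\blacktriangleright_\alpha M:\triangleright_\alpha\tau$; (Unquote) $\Gamma\vdash^AM:\triangleright_\alpha\tau\Rightarrow\Gamma\vdash^{A\alpha}\blacktriangleleft_\alpha M:\tau$; (Gen) $\Gamma\vdash^AM:\tau$, $\alpha\notin\mathrm{FTV}(\Gamma)\cup\mathrm{FTV}(A)$ $\Rightarrow\Gamma\vdash^A\Lambda\alpha.M:\forall\alpha.\tau$; (Ins) $\Gamma\vdash^AM:\forall\alpha.\tau\Rightarrow\Gamma\vdash^AM\,B:\tau[\alpha:=B]$. Paths $T,U$ are elements of the free group generated by the transition variables (reduced words in $\alpha$ and formal inverses $\alpha^{-1}$); $TU$ is the group product, $\varepsilon$ the unit; transitions are identified with inverse-free paths, called positive. $T\le U$ iff $TA=U$ for some positive $A$; thus $\varepsilon\le T$ iff $T$ is positive. $T[\alpha:=\varepsilon]$ is the group homomorphic image of $T$ sending $\alpha$ to $\varepsilon$ and fixing other generators. Annotated reduction $M\xrightarrow{T}N$ is inductively defined by: $(\lambda x{:}\tau.M)N\xrightarrow{\varepsilon}M[x:=N]$; $(\Lambda\alpha.M)A\xrightarrow{\varepsilon}M[\alpha:=A]$; $\blacktriangleleft_\alpha\blacktriangleright_\alpha M\xrightarrow{\alpha^{-1}}M$; if $M\xrightarrow{T}M'$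 then $\lambda x{:}\tau.M\xrightarrow{T}\lambda x{:}\tau.M'$, $MN\xrightarrow{T}M'N$, $NM\xrightarrow{T}NM'$, $M\,A\xrightarrow{T}M'\,A$, $\blacktriangleright_\alpha M\xrightarrow{\alpha T}\blacktriangleright_\alpha M'$, $\blacktriangleleft_\alpha M\xrightarrow{\alpha^{-1}T}\blacktriangleleft_\alpha M'$, and $\Lambda\alpha.M\xrightarrow{T[\alpha:=\varepsilon]}\Lambda\alpha.M'$. *)

theory Defs
  imports Main
begin

text \<open>Terms and types are represented in locally nameless style, so that they are
identified up to alpha-equivalence: bound (term or transition) variables are
de Bruijn indices, free ones are names (natural numbers).\<close>

datatype tatom = TF nat | TB nat

datatype ty =
    TBase nat
  | TArr ty ty
  | TLater tatom ty
  | TAll ty              \<comment> \<open>forall alpha. tau (binds transition index 0)\<close>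

datatype tm =
    Var nat
  | BVar nat
  | App tm tm
  | Lam ty tm            \<comment> \<open>lambda x:tau. M (binds term index 0)\<close>
  | Quo tatom tm
  | Unq tatom tm
  | TLam tm              \<comment> \<open>Lambda alpha. M (binds transition index 0)\<close>
  | TApp tm "tatom list"

fun laters :: "tatom list \<Rightarrow> ty \<Rightarrow> ty" where
  "laters [] t = t"
| "laters (a # as) t = TLater a (laters as t)"

fun quos :: "tatom list \<Rightarrow> tm \<Rightarrow> tm" where
  "quos [] M = M"
| "quos (a # as) M = Quo a (quos as M)"

text \<open>unquotation along A = a1...an is Unq an (... (Unq a1 M))\<close>
definition unqs :: "tatom list \<Rightarrow> tm \<Rightarrow> tm" where
  "unqs B M = foldl (\<lambda>N a. Unq a N) M B"

fun open_ty :: "nat \<Rightarrow> tatom list \<Rightarrow> ty \<Rightarrow> ty" where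
  "open_ty k B (TBase b) = TBase b"
| "open_ty k B (TArr s t) = TArr (open_ty k B s) (open_ty k B t)"
| "open_ty k B (TLater a t) =
     (if a = TB k then laters B (open_ty k B t) else TLater a (open_ty k B t))"
| "open_ty k B (TAll t) = TAll (open_ty (Suc k) B t)"

fun open_tr :: "nat \<Rightarrow> tatom list \<Rightarrow> tm \<Rightarrow> tm" where
  "open_tr k B (Var x) = Var x"
| "open_tr k B (BVar i) = BVar i"
| "open_tr k B (App M N) = App (open_tr k B M) (open_tr k B N)"
| "open_tr k B (Lam t M) = Lam (open_ty k B t) (open_tr k B M)"
| "open_tr k B (Quo a M) =
     (if a = TB k then quos B (open_tr k B M) else Quo a (open_tr k B M))"
| "open_tr k B (Unq a M) =
     (if a = TB k then unqs B (open_tr k B M) else Unq a (open_tr k B M))"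
| "open_tr k B (TLam M) = TLam (open_tr (Suc k) B M)"
| "open_tr k B (TApp M C) =
     TApp (open_tr k B M) (concat (map (\<lambda>a. if a = TB k then B else [a]) C))"

fun open_tm :: "nat \<Rightarrow> tm \<Rightarrow> tm \<Rightarrow> tm" where
  "open_tm k N (Var x) = Var x"
| "open_tm k N (BVar i) = (if i = k then N else BVar i)"
| "open_tm k N (App M1 M2) = App (open_tm k N M1) (open_tm k N M2)"
| "open_tm k N (Lam t M) = Lam t (open_tm (Suc k) N M)"
| "open_tm k N (Quo a M) = Quo a (open_tm k N M)"
| "open_tm k N (Unq a M) = Unq a (open_tm k N M)"
| "open_tm k N (TLam M) = TLam (open_tm k N M)"
| "open_tm k N (TApp M C) = TApp (open_tm k N M) C"

fun ftv_atom :: "tatom \<Rightarrow> nat set" where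
  "ftv_atom (TF a) = {a}"
| "ftv_atom (TB i) = {}"

fun ftv_ty :: "ty \<Rightarrow> nat set" where
  "ftv_ty (TBase b) = {}"
| "ftv_ty (TArr s t) = ftv_ty s \<union> ftv_ty t"
| "ftv_ty (TLater a t) = ftv_atom a \<union> ftv_ty t"
| "ftv_ty (TAll t) = ftv_ty t"

fun ftv_tm :: "tm \<Rightarrow> nat set" where
  "ftv_tm (Var x) = {}"
| "ftv_tm (BVar i) = {}"
| "ftv_tm (App M N) = ftv_tm M \<union> ftv_tm N"
| "ftv_tm (Lam t M) = ftv_ty t \<union> ftv_tm M"
| "ftv_tm (Quo a M) = ftv_atom a \<union> ftv_tm M"
| "ftv_tm (Unq a M) = ftv_atom a \<union> ftv_tm M"
| "ftv_tm (TLam M) = ftv_tm M"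
| "ftv_tm (TApp M C) = ftv_tm M \<union> (\<Union>a\<in>set C. ftv_atom a)"

fun fv_tm :: "tm \<Rightarrow> nat set" where
  "fv_tm (Var x) = {x}"
| "fv_tm (BVar i) = {}"
| "fv_tm (App M N) = fv_tm M \<union> fv_tm N"
| "fv_tm (Lam t M) = fv_tm M"
| "fv_tm (Quo a M) = fv_tm M"
| "fv_tm (Unq a M) = fv_tm M"
| "fv_tm (TLam M) = fv_tm M"
| "fv_tm (TApp M C) = fv_tm M"

fun lc_atom_at :: "nat \<Rightarrow> tatom \<Rightarrow> bool" where
  "lc_atom_at k (TF a) = True"
| "lc_atom_at k (TB i) = (i < k)"

fun lc_ty_at :: "nat \<Rightarrow> ty \<Rightarrow> bool" where
  "lc_ty_at k (TBase b) = True"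
| "lc_ty_at k (TArr s t) = (lc_ty_at k s \<and> lc_ty_at k t)"
| "lc_ty_at k (TLater a t) = (lc_atom_at k a \<and> lc_ty_at k t)"
| "lc_ty_at k (TAll t) = lc_ty_at (Suc k) t"

abbreviation lc_ty :: "ty \<Rightarrow> bool" where "lc_ty t \<equiv> lc_ty_at 0 t"

text \<open>A context maps each (distinct) variable x_i to its type tau_i and stage A_i.\<close>
type_synonym ctx = "nat \<Rightarrow> (ty \<times> nat list) option"

definition ftv_ctx :: "ctx \<Rightarrow> nat set" where
  "ftv_ctx G = (\<Union>x\<in>dom G. ftv_ty (fst (the (G x))) \<union> set (snd (the (G x))))"

inductive typing :: "ctx \<Rightarrow> nat list \<Rightarrow> tm \<Rightarrow> ty \<Rightarrow> bool" where
  T_Var: "G x = Some (t, A) \<Longrightarrow> lc_ty t \<Longrightarrow> typing G A (Var x) t"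
| T_Abs: "x \<notin> dom G \<Longrightarrow> x \<notin> fv_tm M \<Longrightarrow> lc_ty t \<Longrightarrow>
          typing (G(x \<mapsto> (t, A))) A (open_tm 0 (Var x) M) s \<Longrightarrow>
          typing G A (Lam t M) (TArr t s)"
| T_App: "typing G A M (TArr t s) \<Longrightarrow> typing G A N t \<Longrightarrow> typing G A (App M N) s"
| T_Quote: "typing G (A @ [a]) M t \<Longrightarrow> typing G A (Quo (TF a) M) (TLater (TF a) t)"
| T_Unquote: "typing G A M (TLater (TF a) t) \<Longrightarrow> typing G (A @ [a]) (Unq (TF a) M) t"
| T_Gen: "a \<notin> ftv_ctx G \<Longrightarrow> a \<notin> set A \<Longrightarrow> a \<notin> ftv_tm M \<Longrightarrow> a \<notin> ftv_ty t \<Longrightarrow>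
          typing G A (open_tr 0 [TF a] M) (open_ty 0 [TF a] t) \<Longrightarrow>
          typing G A (TLam M) (TAll t)"
| T_Ins: "typing G A M (TAll t) \<Longrightarrow>
          typing G A (TApp M (map TF B)) (open_ty 0 (map TF B) t)"

text \<open>A path is a reduced word; a letter (a, False) is the generator a and
(a, True) its formal inverse a^-1.\<close>
type_synonym path = "(nat \<times> bool) list"

fun pcons :: "nat \<times> bool \<Rightarrow> path \<Rightarrow> path" where
  "pcons x [] = [x]"
| "pcons x (y # ys) = (if fst x = fst y \<and> snd x \<noteq> snd y then ys else x # y # ys)"

definition pmult :: "path \<Rightarrow> path \<Rightarrow> path" where
  "pmult T U = foldr pcons T U"

definition preduce :: "path \<Rightarrow> path" where
  "preduce w = foldr pcons w []"

definition pos :: "nat list \<Rightarrow> path" where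
  "pos A = map (\<lambda>a. (a, False)) A"

definition path_le :: "path \<Rightarrow> path \<Rightarrow> bool" where
  "path_le T U \<longleftrightarrow> (\<exists>A. pmult T (pos A) = U)"

definition perase :: "nat \<Rightarrow> path \<Rightarrow> path" where
  "perase a T = preduce (filter (\<lambda>l. fst l \<noteq> a) T)"

inductive red :: "tm \<Rightarrow> path \<Rightarrow> tm \<Rightarrow> bool" where
  R_Beta: "red (App (Lam t M) N) [] (open_tm 0 N M)"
| R_TBeta: "red (TApp (TLam M) (map TF B)) [] (open_tr 0 (map TF B) M)"
| R_QU: "red (Unq (TF a) (Quo (TF a) M)) [(a, True)] M"
| R_Lam: "x \<notin> fv_tm M \<Longrightarrow> x \<notin> fv_tm M' \<Longrightarrow>
          red (open_tm 0 (Var x) M) T (open_tm 0 (Var x) M') \<Longrightarrow>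
          red (Lam t M) T (Lam t M')"
| R_AppL: "red M T M' \<Longrightarrow> red (App M N) T (App M' N)"
| R_AppR: "red M T M' \<Longrightarrow> red (App N M) T (App N M')"
| R_TApp: "red M T M' \<Longrightarrow> red (TApp M A) T (TApp M' A)"
| R_Quo: "red M T M' \<Longrightarrow> red (Quo (TF a) M) (pmult [(a, False)] T) (Quo (TF a) M')"
| R_Unq: "red M T M' \<Longrightarrow> red (Unq (TF a) M) (pmult [(a, True)] T) (Unq (TF a) M')"
| R_TLam: "a \<notin> ftv_tm M \<Longrightarrow> a \<notin> ftv_tm M' \<Longrightarrow>
          red (open_tr 0 [TF a] M) T (open_tr 0 [TF a] M') \<Longrightarrow>
          red (TLam M) (perase a T) (TLam M')"

end

theory Submission
  imports Defs
begin

fun reduced :: "path \<Rightarrow> bool" where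
  "reduced [] = True"
| "reduced [x] = True"
| "reduced (x # y # ys) = (\<not>(fst x = fst y \<and> snd x \<noteq> snd y) \<and> reduced (y # ys))"

lemma reduced_tl: "reduced (y # ys) \<Longrightarrow> reduced ys"
  by (cases ys) auto

lemma reduced_pcons: "reduced Z \<Longrightarrow> reduced (pcons x Z)"
  by (cases Z) (auto intro: reduced_tl)

lemma preduce_Nil[simp]: "preduce [] = []"
  by (simp add: preduce_def)

lemma preduce_Cons[simp]: "preduce (x # w) = pcons x (preduce w)"
  by (simp add: preduce_def)

lemma preduce_append: "preduce (xs @ ys) = foldr pcons xs (preduce ys)"
  by (simp add: preduce_def)

lemma reduced_preduce: "reduced (preduce w)"
  by (induction w) (auto intro: reduced_pcons)

lemma cancel: "reduced Z \<Longrightarrow> pcons (a, b) (pcons (a, \<not> b) Z) = Z"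
proof (cases Z)
  case Nil then show ?thesis by simp
next
  case (Cons y ys)
  assume r: "reduced Z"
  obtain c d where y: "y = (c, d)" by (cases y)
  show ?thesis
  proof (cases "c = a \<and> d = b")
    case True
    then have Z: "Z = (a, b) # ys" using Cons y by simp
    show ?thesis
    proof (cases ys)
      case Nil then show ?thesis using Z by simp
    next
      case (Cons z zs)
      obtain e f where z: "z = (e, f)" by (cases z)
      have nc: "\<not> (a = e \<and> b \<noteq> f)" using r Z Cons z by simp
      have 1: "pcons (a, \<not> b) Z = ys" using Z by simp
      have 2: "pcons (a, b) ys = (a, b) # ys" using nc Cons z by (cases b; cases f) auto
      have "pcons (a, b) (pcons (a, \<not> b) Z) = pcons (a, b) ys" by (simp only: 1)
      also have "\<dots> = (a, b) # ys" by (rule 2)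
      also have "\<dots> = Z" by (rule Z[symmetric])
      finally show ?thesis .
    qed
  next
    case False
    then have "pcons (a, \<not> b) Z = (a, \<not> b) # Z" using Cons y by (cases b; cases d) auto
    then show ?thesis by simp
  qed
qed

lemma filter_preduce:
  "preduce (filter P (preduce w)) = preduce (filter P w)"
  if "\<And>a b c. P (a, b) = P (a, c)" for P
proof (induction w)
  case Nil then show ?case by simp
next
  case (Cons x w)
  obtain a b where x: "x = (a, b)" by (cases x)
  define R where "R = preduce w"
  have rR: "reduced R" unfolding R_def by (rule reduced_preduce)
  have gen: "preduce (filter P (x # R)) = foldr pcons (filter P [x]) (preduce (filter P R))"
    using preduce_append[of "filter P [x]" "filter P R"] by simp
  show ?case
  proof (cases R)
    case Nil
    then show ?thesis using Cons gen R_def by (simp add: preduce_append)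
  next
    case (Cons y R')
    obtain c d where y: "y = (c, d)" by (cases y)
    show ?thesis
    proof (cases "c = a \<and> d \<noteq> b")
      case True
      have rR': "reduced (preduce (filter P R'))" by (rule reduced_preduce)
      have L: "preduce (filter P (preduce (x # w))) = preduce (filter P R')"
        using True Cons x y R_def by simp
      have Rh: "preduce (filter P (x # w)) = foldr pcons (filter P [x]) (preduce (filter P R))"
        using preduce_append[of "filter P [x]" "filter P w"] Cons.IH R_def by simp
      show ?thesis
      proof (cases "P (a, b)")
        case True2: True
        have "P (a, \<not> b)" using True2 that by metis
        then have "foldr pcons (filter P [x]) (preduce (filter P R)) = pcons (a, b) (pcons (a, \<not> b) (preduce (filter P R')))"
          using Cons y True True2 x by simp
        then show ?thesis using cancel[OF rR'] L Rh by simp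
      next
        case False2: False
        have "\<not> P (a, d)" using False2 that by metis
        then have "filter P R = filter P R'" using Cons y True by simp
        moreover have "filter P [x] = []" using False2 x by simp
        ultimately show ?thesis using L Rh by simp
      qed
    next
      case False
      then have "pcons x R = x # R" using Cons x y by (cases b; cases d) auto
      then show ?thesis using gen Cons.IH R_def by simp
    qed
  qed
qed

fun lt :: "tatom \<Rightarrow> bool \<Rightarrow> path" where
  "lt (TF a) b = [(a, b)]"
| "lt (TB i) b = []"

fun Wred :: "tm \<Rightarrow> path set" where
  "Wred (Var x) = {[]}"
| "Wred (BVar i) = {[]}"
| "Wred (App M N) = Wred M \<union> Wred N"
| "Wred (Lam t M) = Wred M"
| "Wred (Quo a M) = insert [] ((\<lambda>w. lt a False @ w) ` Wred M)"
| "Wred (Unq a M) = insert [] ((\<lambda>w. lt a True @ w) ` Wred M)"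
| "Wred (TLam M) = Wred M"
| "Wred (TApp M C) = Wred M"

lemma Nil_Wred: "[] \<in> Wred M"
  by (induction M) auto

lemma Wred_open_tm: "Wred (open_tm k (Var x) M) = Wred M"
  by (induction M arbitrary: k) auto

lemma unqs_single[simp]: "unqs [a] N = Unq a N"
  by (simp add: unqs_def)

lemma Wred_open_tr_ex:
  "a \<notin> ftv_tm M \<Longrightarrow> w \<in> Wred M \<Longrightarrow>
   \<exists>w' \<in> Wred (open_tr k [TF a] M). filter (\<lambda>l. fst l \<noteq> a) w' = w"
proof (induction M arbitrary: k w)
  case (Quo at M)
  show ?case
  proof (cases "w = []")
    case True then show ?thesis by (cases "at = TB k") (auto simp: Nil_Wred)
  next
    case False
    then obtain w0 where w: "w = lt at False @ w0" "w0 \<in> Wred M" using Quo.prems by auto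
    obtain w0' where w0': "w0' \<in> Wred (open_tr k [TF a] M)" "filter (\<lambda>l. fst l \<noteq> a) w0' = w0"
      using Quo.IH[of w0 k] Quo.prems(1) w(2) by auto
    show ?thesis
    proof (cases at)
      case (TF c)
      then have "c \<noteq> a" using Quo.prems by auto
      then show ?thesis using TF w w0' by (intro bexI[where x="(c,False) # w0'"]) auto
    next
      case (TB j)
      show ?thesis
      proof (cases "j = k")
        case True
        then show ?thesis using TB w w0' by (intro bexI[where x="(a,False) # w0'"]) auto
      next
        case False
        then show ?thesis using TB w w0' by (intro bexI[where x="w0'"]) auto
      qed
    qed
  qed
next
  case (Unq at M)
  show ?case
  proof (cases "w = []")
    case True then show ?thesis by (cases "at = TB k") (auto simp: Nil_Wred)
  next
    case False
    then obtain w0 where w: "w = lt at True @ w0" "w0 \<in> Wred M" using Unq.prems by auto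
    obtain w0' where w0': "w0' \<in> Wred (open_tr k [TF a] M)" "filter (\<lambda>l. fst l \<noteq> a) w0' = w0"
      using Unq.IH[of w0 k] Unq.prems(1) w(2) by auto
    show ?thesis
    proof (cases at)
      case (TF c)
      then have "c \<noteq> a" using Unq.prems by auto
      then show ?thesis using TF w w0' by (intro bexI[where x="(c,True) # w0'"]) auto
    next
      case (TB j)
      show ?thesis
      proof (cases "j = k")
        case True
        then show ?thesis using TB w w0' by (intro bexI[where x="(a,True) # w0'"]) auto
      next
        case False
        then show ?thesis using TB w w0' by (intro bexI[where x="w0'"]) auto
      qed
    qed
  qed
qed fastforce+

lemma Wred_open_tr_filter:
  "a \<notin> ftv_tm M \<Longrightarrow> w \<in> Wred (open_tr k [TF a] M) \<Longrightarrow>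
   filter (\<lambda>l. fst l \<noteq> a) w \<in> Wred M"
proof (induction M arbitrary: k w)
  case (Quo at M)
  then show ?case by (cases at) (auto split: if_splits)
next
  case (Unq at M)
  then show ?case by (cases at) (auto split: if_splits)
qed auto

lemma pos_append: "pos (A @ B) = pos A @ pos B"
  by (simp add: pos_def)

lemma pcons_pos: "pcons (a, False) (map (\<lambda>a. (a, False)) A) = (a, False) # map (\<lambda>a. (a, False)) A"
  by (cases A) auto

lemma preduce_pos: "preduce (pos A) = pos A"
  by (induction A) (auto simp: pos_def pcons_pos)

lemma typing_pos:
  "typing G A M t \<Longrightarrow> w \<in> Wred M \<Longrightarrow> \<exists>B. preduce (pos A @ w) = pos B"
proof (induction arbitrary: w rule: typing.induct)
  case (T_Var G x t A)
  then show ?case by (auto simp: preduce_pos)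
next
  case (T_Abs x G M t A s)
  then show ?case by (simp add: Wred_open_tm)
next
  case (T_App G A M t s N)
  then show ?case by auto
next
  case (T_Quote G A a M t)
  show ?case
  proof (cases "w = []")
    case True then show ?thesis by (auto simp: preduce_pos)
  next
    case False
    then obtain w0 where w: "w = (a, False) # w0" "w0 \<in> Wred M" using T_Quote.prems by auto
    have "pos A @ w = pos (A @ [a]) @ w0" using w by (simp add: pos_append pos_def)
    then show ?thesis using T_Quote.IH[OF w(2)] by simp
  qed
next
  case (T_Unquote G A M a t)
  show ?case
  proof (cases "w = []")
    case True then show ?thesis by (auto simp: preduce_pos)
  next
    case False
    then obtain w0 where w: "w = (a, True) # w0" "w0 \<in> Wred M" using T_Unquote.prems by auto
    have "preduce (pos (A @ [a]) @ w) = foldr pcons (pos A) (pcons (a, False) (pcons (a, \<not> False) (preduce w0)))"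
      using w by (simp add: pos_append preduce_append pos_def)
    also have "\<dots> = preduce (pos A @ w0)"
      using cancel[OF reduced_preduce[of w0], of a False] by (simp add: preduce_append)
    finally show ?thesis using T_Unquote.IH w by auto
  qed
next
  case (T_Gen a G A M t)
  obtain w' where w': "w' \<in> Wred (open_tr 0 [TF a] M)" "filter (\<lambda>l. fst l \<noteq> a) w' = w"
    using Wred_open_tr_ex[OF T_Gen.hyps(3)] T_Gen.prems by (auto simp: Wred.simps)
  obtain B where B: "preduce (pos A @ w') = pos B" using T_Gen.IH w' by blast
  have fA: "filter (\<lambda>l. fst l \<noteq> a) (pos A) = pos A"
  proof -
    have "filter (\<lambda>x. x \<noteq> a) A = A" using T_Gen.hyps(2) by (induction A) auto
    then show ?thesis by (simp add: pos_def filter_map o_def)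
  qed
  have "preduce (pos A @ w) = preduce (filter (\<lambda>l. fst l \<noteq> a) (pos A @ w'))"
    using w' fA by simp
  also have "\<dots> = preduce (filter (\<lambda>l. fst l \<noteq> a) (preduce (pos A @ w')))"
    by (rule filter_preduce[symmetric]) auto
  also have "\<dots> = pos (filter (\<lambda>b. b \<noteq> a) B)"
    using B preduce_pos[of "filter (\<lambda>b. b \<noteq> a) B"] by (simp add: pos_def filter_map o_def)
  finally show ?case by blast
next
  case (T_Ins G A M t B)
  then show ?case by auto
qed

lemma red_Wred: "red M T N \<Longrightarrow> \<exists>w \<in> Wred M. T = preduce w"
proof (induction rule: red.induct)
  case (R_Beta t M N)
  then show ?case using Nil_Wred by force
next
  case (R_TBeta M B)
  then show ?case using Nil_Wred by force
next
  case (R_QU a M)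
  then show ?case by (auto intro!: bexI[where x="[(a,True)]"])
next
  case (R_Lam x M M' T t)
  then show ?case by (simp add: Wred_open_tm)
next
  case (R_Quo M T M' a)
  then obtain w where "w \<in> Wred M" "T = preduce w" by auto
  moreover have "(a,False) # w \<in> Wred (Quo (TF a) M)" using \<open>w \<in> Wred M\<close> by simp
  moreover have "pmult [(a, False)] T = preduce ((a,False) # w)" using \<open>T = preduce w\<close> by (simp add: pmult_def)
  ultimately show ?case by blast
next
  case (R_Unq M T M' a)
  then obtain w where "w \<in> Wred M" "T = preduce w" by auto
  moreover have "(a,True) # w \<in> Wred (Unq (TF a) M)" using \<open>w \<in> Wred M\<close> by simp
  moreover have "pmult [(a, True)] T = preduce ((a,True) # w)" using \<open>T = preduce w\<close> by (simp add: pmult_def)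
  ultimately show ?case by blast
next
  case (R_TLam a M M' T)
  then obtain w where w: "w \<in> Wred (open_tr 0 [TF a] M)" "T = preduce w" by auto
  have "perase a T = preduce (filter (\<lambda>l. fst l \<noteq> a) w)"
    using w unfolding perase_def by (simp add: filter_preduce)
  then show ?case using Wred_open_tr_filter[OF R_TLam.hyps(1) w(1)] by auto
qed auto

theorem mainTheorem8:
  fixes G :: ctx and A :: "nat list" and M N :: tm and t :: ty and T :: path
  assumes "finite (dom G)"
    and "typing G A M t"
    and "red M T N"
  shows "path_le [] (pmult (pos A) T)"
proof -
  obtain w where w: "w \<in> Wred M" "T = preduce w" using red_Wred[OF assms(3)] by auto
  obtain B where "preduce (pos A @ w) = pos B" using typing_pos[OF assms(2) w(1)] by auto
  then have "pmult (pos A) T = pos B" using w by (simp add: pmult_def preduce_append)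
  then show ?thesis by (auto simp: path_le_def pmult_def)
qed

end
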